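(* Let $\mathbf{v}$ be quasi-definite with SMOP $(P_n)$, recurrence coefficients $(b_n),(a_n)$ and monic Jacobi matrix $J$; let $c,\widehat{\mathbf{v}}_0\in\mathbb{C}$ with $D_n:=\mathbf{v}_0P^{(1)}_{n-1}(c)+\widehat{\mathbf{v}}_0P_n(c)\ne0$ for all $n\ge0$, and $\widehat{\mathbf{v}}=(x-c)^{-1}\mathbf{v}+\widehat{\mathbf{v}}_0\boldsymbol\delta_c$ with SMOP $(\widehat P_n)$ and associated polynomials of the first kind $(\widehat P^{(1)}_n)$, whose monic Jacobi matrix is $\widehat J^{(1)}$. Let $\ell_n=-D_n/D_{n-1}$ ($n\ge1$) and $\beta_n=-\widehat P_{n+1}(c)/\widehat P_n(c)$ ($n\ge0$), so that $J-cI=UL$ with $U$ upper bidiagonal (diagonal $\beta_0,\beta_1,\dots$, superdiagonal $1$) and $L$ lower bidiagonal (diagonal $1$, subdiagonal $\ell_1,\ell_2,\dots$). Let $S_n=P_n+\frac{\mathbf{v}_0}{\widehat{\mathbf{v}}_0}P^{(1)}_{n-1}$ (the co-recursive polynomials of parameter $-\mathbf{v}_0/\widehat{\mathbf{v}}_0$ of $\mathbf{v}$), let $\mathbf{v}^\alpha$ be a quasi-definite functional whose SMOP is $(S_n)$, and let $J_\alpha$ be the monic Jacobi matrix of $(S_n)$. Then: (1) $(\widehat P^{(1)}_n)$ is the SMOP of $(x-c)\mathbf{v}^\alpha$, i.e. up to a nonzero factor $\widehat{\mathbf{v}}^{(1)}=(x-c)\mathbf{v}^\alpha$; (2) $J_\alpha-cI=\widehat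 L\widehat U$ and $\widehat J^{(1)}-cI=\widehat U\widehat L$, where $\widehat L$ is lower bidiagonal with diagonal $1$ and subdiagonal $\beta_1,\beta_2,\dots$, and $\widehat U$ is upper bidiagonal with diagonal $\ell_1,\ell_2,\dots$ and superdiagonal $1$.
   Context: Linear functionals on complex polynomials; $\langle(x-c)^{-1}\mathbf{v},p\rangle=\langle\mathbf{v},(p(x)-p(c))/(x-c)\rangle$, $\langle\boldsymbol\delta_c,p\rangle=p(c)$, $\langle(x-c)\mathbf{w},p\rangle=\langle\mathbf{w},(x-c)p\rangle$. Quasi-definite: all leading principal Hankel minors nonzero; SMOP = sequence of monic orthogonal polynomials with $xP_n=P_{n+1}+b_nP_n+a_nP_{n-1}$, $P_{-1}=0,P_0=1$, $a_n\neq0$; the hypothesis $D_n\ne0$ guarantees $\widehat{\mathbf{v}}$ is quasi-definite with $\widehat P_n=P_n+\ell_nP_{n-1}$ and $\widehat P_n(c)\ne0$. Associated polynomials of the first kind: monic, $xP^{(1)}_n=P^{(1)}_{n+1}+b_{n+1}P^{(1)}_n+a_{n+1}P^{(1)}_{n-1}$, $P^{(1)}_{-1}=0,P^{(1)}_0=1$. Monic Jacobi matrix: tridiagonal, diagonal $(b_0,b_1,\dots)$, superdiagonal $1$'s, subdiagonal $(a_1,a_2,\dots)$. *)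

theory Defs
  imports "HOL-Computational_Algebra.Polynomial" "HOL-Analysis.Infinite_Sum" "Jordan_Normal_Form.Determinant"
begin

definition lin_func :: "(complex poly \<Rightarrow> complex) \<Rightarrow> bool" where
  "lin_func u \<longleftrightarrow> (\<forall>p q. u (p + q) = u p + u q) \<and> (\<forall>k p. u (smult k p) = k * u p)"

definition moment :: "(complex poly \<Rightarrow> complex) \<Rightarrow> nat \<Rightarrow> complex" where
  "moment u k = u (monom 1 k)"

definition quasi_definite :: "(complex poly \<Rightarrow> complex) \<Rightarrow> bool" where
  "quasi_definite u \<longleftrightarrow>
     (\<forall>n. det (mat (Suc n) (Suc n) (\<lambda>(i, j). moment u (i + j))) \<noteq> 0)"

definition is_SMOP :: "(complex poly \<Rightarrow> complex) \<Rightarrow> (nat \<Rightarrow> complex poly) \<Rightarrow> bool" where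
  "is_SMOP u P \<longleftrightarrow>
     (\<forall>n. degree (P n) = n \<and> lead_coeff (P n) = 1) \<and>
     (\<forall>n m. n \<noteq> m \<longrightarrow> u (P n * P m) = 0) \<and>
     (\<forall>n. u (P n * P n) \<noteq> 0)"

definition recur :: "(nat \<Rightarrow> complex) \<Rightarrow> (nat \<Rightarrow> complex) \<Rightarrow> (nat \<Rightarrow> complex poly) \<Rightarrow> bool" where
  "recur b a P \<longleftrightarrow> P 0 = 1 \<and>
     (\<forall>n. [:0, 1:] * P n = P (Suc n) + smult (b n) (P n)
                            + smult (a n) (if n = 0 then 0 else P (n - 1))) \<and>
     (\<forall>n\<ge>1. a n \<noteq> 0)"

fun assoc1 :: "(nat \<Rightarrow> complex) \<Rightarrow> (nat \<Rightarrow> complex) \<Rightarrow> nat \<Rightarrow> complex poly" where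
  "assoc1 b a 0 = 1"
| "assoc1 b a (Suc 0) = [:- b 1, 1:]"
| "assoc1 b a (Suc (Suc n)) =
     [:- b (n + 2), 1:] * assoc1 b a (Suc n) - smult (a (n + 2)) (assoc1 b a n)"

text \<open>P^(1)_{n-1}, with P^(1)_{-1} = 0.\<close>
definition assocm1 :: "(nat \<Rightarrow> complex) \<Rightarrow> (nat \<Rightarrow> complex) \<Rightarrow> nat \<Rightarrow> complex poly" where
  "assocm1 b a n = (if n = 0 then 0 else assoc1 b a (n - 1))"

definition divx :: "(complex poly \<Rightarrow> complex) \<Rightarrow> complex \<Rightarrow> complex poly \<Rightarrow> complex" where
  "divx u c p = u (synthetic_div p c)"   \<comment> \<open>(x-c)^{-1} u ; synthetic_div p c = (p - p(c))/(x - c)\<close>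

definition mulx :: "(complex poly \<Rightarrow> complex) \<Rightarrow> complex \<Rightarrow> complex poly \<Rightarrow> complex" where
  "mulx u c p = u ([:- c, 1:] * p)"

definition dirac :: "complex \<Rightarrow> complex poly \<Rightarrow> complex" where
  "dirac c p = poly p c"

definition jacobi :: "(nat \<Rightarrow> complex) \<Rightarrow> (nat \<Rightarrow> complex) \<Rightarrow> nat \<Rightarrow> nat \<Rightarrow> complex" where
  "jacobi b a i j = (if j = i then b i else if j = Suc i then 1 else if i = Suc j then a i else 0)"

definition lower_bidiag :: "(nat \<Rightarrow> complex) \<Rightarrow> nat \<Rightarrow> nat \<Rightarrow> complex" where
  "lower_bidiag d i j = (if j = i then 1 else if i = Suc j then d i else 0)"

definition upper_bidiag :: "(nat \<Rightarrow> complex) \<Rightarrow> nat \<Rightarrow> nat \<Rightarrow> complex" where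
  "upper_bidiag e i j = (if j = i then e i else if j = Suc i then 1 else 0)"

definition imat_mult :: "(nat \<Rightarrow> nat \<Rightarrow> complex) \<Rightarrow> (nat \<Rightarrow> nat \<Rightarrow> complex) \<Rightarrow> nat \<Rightarrow> nat \<Rightarrow> complex" where
  "imat_mult A B i j = infsum (\<lambda>k. A i k * B k j) UNIV"

definition imat_shift :: "(nat \<Rightarrow> nat \<Rightarrow> complex) \<Rightarrow> complex \<Rightarrow> nat \<Rightarrow> nat \<Rightarrow> complex" where
  "imat_shift A c i j = A i j - (if i = j then c else 0)"

end

theory Submission
  imports Defs
begin


lemma lin_add: "lin_func u \<Longrightarrow> u (p + q) = u p + u q" by (simp add: lin_func_def)
lemma lin_smult: "lin_func u \<Longrightarrow> u (smult k p) = k * u p" by (simp add: lin_func_def)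
lemma lin_zero: "lin_func u \<Longrightarrow> u 0 = 0"
  using lin_smult[of u 0 0] by simp
lemma lin_diff: "lin_func u \<Longrightarrow> u (p - q) = u p - u q"
  using lin_add[of u "p - q" q] by simp
lemma lin_const: "lin_func u \<Longrightarrow> u (p * [:k:]) = k * u p"
  using lin_smult[of u k p] by simp
lemma lin_sum: assumes "lin_func u" "finite A" shows "u (\<Sum>i\<in>A. f i) = (\<Sum>i\<in>A. u (f i))"
  using assms(2) by (induction A rule: finite_induct) (auto simp: lin_zero[OF assms(1)] lin_add[OF assms(1)])

lemma deg_drop: "degree (q::'a::zero poly) \<le> d \<Longrightarrow> coeff q d = 0 \<Longrightarrow> q = 0 \<or> degree q < d"
  by (metis le_neq_implies_less leading_coeff_0_iff)

lemma orth_low: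
  assumes u: "lin_func u" and S: "is_SMOP u P"
  shows "degree g < n \<Longrightarrow> u (g * P n) = 0"
proof (induction "degree g" arbitrary: g rule: less_induct)
  case less
  define d where "d = degree g"
  define g' where "g' = g - smult (lead_coeff g) (P d)"
  have dP: "degree (P d) = d" "lead_coeff (P d) = 1" using S unfolding is_SMOP_def by blast+
  have "g * P n = g' * P n + smult (lead_coeff g) (P d * P n)" unfolding g'_def by (simp add: algebra_simps)
  hence e: "u (g * P n) = u (g' * P n) + lead_coeff g * u (P d * P n)"
    using u by (simp add: lin_add lin_smult)
  have "u (P d * P n) = 0" using S less.prems d_def by (auto simp: is_SMOP_def)
  moreover have "g' = 0 \<or> degree g' < d"
  proof (rule deg_drop)
    show "degree g' \<le> d" unfolding g'_def using dP d_def
      by (metis degree_diff_le degree_smult_le order_refl)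
    show "coeff g' d = 0" using dP d_def by (metis g'_def coeff_diff coeff_smult mult.right_neutral diff_self)
  qed
  moreover have "g' = 0 \<Longrightarrow> u (g' * P n) = 0" using u by (simp add: lin_zero)
  moreover have "degree g' < d \<Longrightarrow> u (g' * P n) = 0"
    using less.hyps less.prems d_def by simp
  ultimately show ?case using e by auto
qed

lemma SMOP_unique:
  assumes u: "lin_func u" and S: "is_SMOP u P"
    and Q: "degree Q = n" "lead_coeff Q = 1" and orth: "\<And>g. degree g < n \<Longrightarrow> u (Q * g) = 0"
  shows "Q = P n"
proof (rule ccontr)
  assume ne: "Q \<noteq> P n"
  define f where "f = Q - P n"
  have dPn: "degree (P n) = n" "lead_coeff (P n) = 1" using S unfolding is_SMOP_def by blast+
  have "f = 0 \<or> degree f < n"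
  proof (rule deg_drop)
    show "degree f \<le> n" unfolding f_def using Q dPn by (metis degree_diff_le order_refl)
    show "coeff f n = 0" using Q dPn by (metis f_def coeff_diff diff_self)
  qed
  with ne have fd: "f \<noteq> 0" "degree f < n" by (auto simp: f_def)
  define d where "d = degree f"
  have dP: "degree (P d) = d" "lead_coeff (P d) = 1" using S unfolding is_SMOP_def by blast+
  define f' where "f' = f - smult (lead_coeff f) (P d)"
  have "f' = 0 \<or> degree f' < d"
  proof (rule deg_drop)
    show "degree f' \<le> d" unfolding f'_def using dP d_def
      by (metis degree_diff_le degree_smult_le order_refl)
    show "coeff f' d = 0" using dP d_def by (metis f'_def coeff_diff coeff_smult mult.right_neutral diff_self)
  qed
  hence z: "u (f' * P d) = 0" using orth_low[OF u S] u lin_zero by auto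
  have "f * P d = f' * P d + smult (lead_coeff f) (P d * P d)" unfolding f'_def by (simp add: algebra_simps)
  hence e1: "u (f * P d) = lead_coeff f * u (P d * P d)" using u z by (simp add: lin_add lin_smult)
  have "u (f * P d) = u (Q * P d) - u (P n * P d)" unfolding f_def using u
    by (simp add: lin_diff algebra_simps)
  also have "u (Q * P d) = 0" using orth dP fd d_def by simp
  also have "u (P n * P d) = 0" using S fd d_def by (auto simp: is_SMOP_def)
  finally have "u (f * P d) = 0" by simp
  moreover have "lead_coeff f \<noteq> 0" using fd by simp
  moreover have "u (P d * P d) \<noteq> 0" using S by (auto simp: is_SMOP_def)
  ultimately show False using e1 by simp
qed



lemma mult_form:
  assumes u: "lin_func u" and dg: "degree p \<le> n"
  shows "(\<Sum>k = 0..<Suc n. coeff p k * moment u (k + j)) = u (p * monom 1 j)"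
proof -
  have "p * monom 1 j = (\<Sum>k\<le>n. monom (coeff p k) k) * monom 1 j"
    using poly_as_sum_of_monoms'[OF dg] by simp
  also have "\<dots> = (\<Sum>k\<le>n. smult (coeff p k) (monom 1 (k + j)))"
    by (simp add: sum_distrib_right mult_monom smult_monom)
  finally have "u (p * monom 1 j) = (\<Sum>k\<le>n. coeff p k * moment u (k + j))"
    using u by (simp add: lin_sum lin_smult moment_def)
  moreover have "{0..<Suc n} = {..n}" by auto
  ultimately show ?thesis by simp
qed

lemma SMOP_qd:
  assumes u: "lin_func u" and S: "is_SMOP u P"
  shows "quasi_definite u"
  unfolding quasi_definite_def
proof
  fix n
  define N where "N = Suc n"
  define H where "H = mat N N (\<lambda>(i, j). moment u (i + j))"
  define C where "C = mat N N (\<lambda>(i, j). coeff (P i) j)"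
  have dP: "\<And>i. degree (P i) = i" "\<And>i. lead_coeff (P i) = 1"
    using S unfolding is_SMOP_def by blast+
  have CH: "(C * H) $$ (i, j) = u (P i * monom 1 j)" if "i < N" "j < N" for i j
  proof -
    have "(C * H) $$ (i, j) = (\<Sum>k = 0..<N. coeff (P i) k * moment u (k + j))"
      using that by (simp add: C_def H_def scalar_prod_def)
    also have "\<dots> = u (P i * monom 1 j)" unfolding N_def
      by (rule mult_form[OF u]) (use that dP N_def in auto)
    finally show ?thesis .
  qed
  have cm: "C * H \<in> carrier_mat N N" "C \<in> carrier_mat N N" "H \<in> carrier_mat N N"
    by (auto simp: C_def H_def)
  have ut: "upper_triangular (C * H)"
    unfolding upper_triangular_def
  proof (intro allI impI)
    fix i j assume "i < dim_row (C * H)" "j < i"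
    hence "i < N" "j < N" "j < i" using cm by auto
    hence "(C * H) $$ (i, j) = u (monom 1 j * P i)" using CH by (simp add: mult.commute)
    also have "\<dots> = 0" by (rule orth_low[OF u S]) (use \<open>j < i\<close> in \<open>simp add: degree_monom_eq\<close>)
    finally show "(C * H) $$ (i, j) = 0" .
  qed
  have diag: "u (P i * monom 1 i) \<noteq> 0" for i
  proof -
    have "P i - monom 1 i = 0 \<or> degree (P i - monom 1 i) < i"
    proof (rule deg_drop)
      show "degree (P i - monom 1 i) \<le> i"
        by (metis degree_diff_le degree_monom_le dP(1) order_refl)
      show "coeff (P i - monom 1 i) i = 0" using dP by simp
    qed
    hence z: "u ((P i - monom 1 i) * P i) = 0" using orth_low[OF u S] lin_zero[OF u] by auto
    have "u (P i * monom 1 i) = u (P i * P i) - u ((P i - monom 1 i) * P i)"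
      using u by (simp add: lin_diff[symmetric] algebra_simps)
    thus ?thesis using z S unfolding is_SMOP_def by auto
  qed
  have "det (C * H) = prod_list (diag_mat (C * H))" by (rule det_upper_triangular[OF ut cm(1)])
  also have "\<dots> = (\<Prod>i = 0..<N. (C * H) $$ (i, i))" using cm by (simp add: prod_list_diag_prod)
  also have "\<dots> = (\<Prod>i = 0..<N. u (P i * monom 1 i))" using CH by (intro prod.cong) auto
  finally have "det (C * H) \<noteq> 0" using diag by simp
  moreover have "det (C * H) = det C * det H" by (rule det_mult[OF cm(2,3)])
  ultimately have "det H \<noteq> 0" by simp
  thus "det (mat (Suc n) (Suc n) (\<lambda>(i, j). moment u (i + j))) \<noteq> 0" by (simp add: H_def N_def)
qed



lemma X_shift: "[:0,1:] * p = [:-c,1:]*p + smult c (p::complex poly)"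
  by (simp add: algebra_simps)

lemma sd_add: "synthetic_div (p + q) c = synthetic_div p c + synthetic_div (q::complex poly) c"
proof -
  have "(p + q) + smult c (synthetic_div p c + synthetic_div q c)
      = pCons (poly p c + poly q c) (synthetic_div p c + synthetic_div q c)"
    using synthetic_div_correct[of p c] synthetic_div_correct[of q c]
    by (metis (no_types, lifting) add.assoc add.left_commute add_pCons smult_add_right)
  from synthetic_div_unique[OF this] show ?thesis by simp
qed

lemma sd_smult: "synthetic_div (smult k p) c = smult k (synthetic_div (p::complex poly) c)"
proof -
  have "smult k p + smult c (smult k (synthetic_div p c))
      = pCons (k * poly p c) (smult k (synthetic_div p c))"
    using arg_cong[OF synthetic_div_correct[of p c], of "smult k"]
    by (simp add: smult_add_right mult.commute)
  from synthetic_div_unique[OF this] show ?thesis by simp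
qed

lemma sd_X: "synthetic_div ([:-c,1:] * f) c = (f::complex poly)"
proof -
  have "[:-c,1:] * f + smult c f = pCons 0 f" by simp
  from synthetic_div_unique[OF this] show ?thesis by simp
qed

lemma coef_unique:
  fixes p q :: "complex poly"
  assumes "degree p = n" "lead_coeff p = 1" "degree q < n" "q \<noteq> 0"
    and e: "smult x p + smult y q = smult x' p + smult y' q"
  shows "x = x' \<and> y = y'"
proof -
  have "coeff q n = 0" using assms(3) by (simp add: coeff_eq_0)
  hence xx: "x = x'" using arg_cong[OF e, of "\<lambda>r. coeff r n"] assms(1,2) by simp
  hence "smult (y - y') q = 0" using e by (simp add: smult_diff_left)
  thus ?thesis using xx assms(4) by simp
qed



lemma imat_finite:
  assumes "finite F" "\<And>k. k \<notin> F \<Longrightarrow> A i k * B k j = 0"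
  shows "imat_mult A B i j = (\<Sum>k\<in>F. A i k * B k j)"
proof -
  have "infsum (\<lambda>k. A i k * B k j) UNIV = infsum (\<lambda>k. A i k * B k j) F"
    by (rule infsum_cong_neutral) (use assms in auto)
  thus ?thesis using assms(1) by (simp add: imat_mult_def)
qed

lemma LU_entry:
  "imat_mult (lower_bidiag d) (upper_bidiag e) i j =
    (if j = i then e i + (if i = 0 then 0 else d i) else if j = Suc i then 1
     else if i = Suc j then d i * e j else 0)"
proof (cases i)
  case 0
  have "imat_mult (lower_bidiag d) (upper_bidiag e) i j = (\<Sum>k\<in>{0}. lower_bidiag d i k * upper_bidiag e k j)"
    by (rule imat_finite) (auto simp: lower_bidiag_def 0)
  thus ?thesis by (auto simp: lower_bidiag_def upper_bidiag_def 0)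
next
  case (Suc m)
  have "imat_mult (lower_bidiag d) (upper_bidiag e) i j = (\<Sum>k\<in>{m, Suc m}. lower_bidiag d i k * upper_bidiag e k j)"
    by (rule imat_finite) (auto simp: lower_bidiag_def Suc)
  thus ?thesis by (auto simp: lower_bidiag_def upper_bidiag_def Suc)
qed

lemma UL_entry:
  "imat_mult (upper_bidiag e) (lower_bidiag d) i j =
    (if j = i then e i + d (Suc i) else if j = Suc i then 1
     else if i = Suc j then e i * d i else 0)"
proof -
  have "imat_mult (upper_bidiag e) (lower_bidiag d) i j = (\<Sum>k\<in>{i, Suc i}. upper_bidiag e i k * lower_bidiag d k j)"
    by (rule imat_finite) (auto simp: upper_bidiag_def)
  thus ?thesis by (auto simp: lower_bidiag_def upper_bidiag_def)
qed



lemma F1: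
  fixes P Ph :: "nat \<Rightarrow> complex poly" and b a bh ah ell g beta :: "nat \<Rightarrow> complex" and c :: complex
  assumes P0: "P 0 = 1"
    and Prec: "\<And>n. [:0,1:] * P n = P (Suc n) + smult (b n) (P n)
                            + smult (a n) (if n = 0 then 0 else P (n - 1))"
    and Ph0: "Ph 0 = 1" and PhQ: "\<And>n. n \<ge> 1 \<Longrightarrow> Ph n = P n + smult (ell n) (P (n - 1))"
    and Phrec: "\<And>n. [:0,1:] * Ph n = Ph (Suc n) + smult (bh n) (Ph n)
                            + smult (ah n) (if n = 0 then 0 else Ph (n - 1))"
    and dPh: "\<And>n. degree (Ph n) = n" "\<And>n. lead_coeff (Ph n) = 1"
    and g_def: "\<And>n. g n = b n - c - ell (Suc n)"
    and gell: "\<And>n. n \<ge> 1 \<Longrightarrow> g n * ell n = a n"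
    and gnz: "\<And>n. g n \<noteq> 0"
    and beta_def: "\<And>n. beta n = - poly (Ph (Suc n)) c / poly (Ph n) c"
  shows "(\<forall>n. beta n = g n) \<and> (\<forall>n\<ge>1. bh n = c + g n + ell n \<and> ah n = ell n * g (n - 1))"
proof -
  define X where "X = [:-c, 1::complex:]"
  have XP: "X * P n = Ph (Suc n) + smult (g n) (Ph n)" for n
  proof (cases "n = 0")
    case True
    have "[:0,1:] = P 1 + [:b 0:]" using Prec[of 0] P0 by simp
    hence "P 1 = [:0,1:] - [:b 0:]" by (simp add: eq_diff_eq)
    thus ?thesis using True PhQ[of 1] P0 Ph0 g_def[of 0] by (simp add: X_def)
  next
    case False
    have bn: "b n = c + g n + ell (Suc n)" using g_def[of n] by simp
    have an: "a n = g n * ell n" using gell[of n] False by simp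
    have "X * P n = [:0,1:] * P n - smult c (P n)" unfolding X_def using X_shift[of "P n" c] by simp
    also have "\<dots> = P (Suc n) + smult (b n - c) (P n) + smult (a n) (P (n - 1))"
      using Prec[of n] False by (simp add: algebra_simps smult_diff_left)
    also have "\<dots> = Ph (Suc n) + smult (g n) (Ph n)"
      unfolding bn an using PhQ[of n] PhQ[of "Suc n"] False
      by (simp add: algebra_simps smult_add_left smult_diff_left smult_add_right)
    finally show ?thesis .
  qed
  have Phc: "poly (Ph (Suc n)) c = - g n * poly (Ph n) c" for n
    using arg_cong[OF XP[of n], of "\<lambda>p. poly p c"] by (simp add: X_def add_eq_0_iff)
  have Phcnz: "poly (Ph n) c \<noteq> 0" for n
    by (induction n) (use Ph0 Phc gnz in auto)
  have bt: "beta n = g n" for n using beta_def[of n] Phc[of n] Phcnz[of n] by simp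
  have rec: "bh n = c + g n + ell n \<and> ah n = ell n * g (n - 1)" if n1: "n \<ge> 1" for n
  proof -
    have "X * Ph n = X * P n + smult (ell n) (X * P (n - 1))" using PhQ[OF n1] by (simp add: algebra_simps)
    also have "\<dots> = Ph (Suc n) + smult (g n + ell n) (Ph n) + smult (ell n * g (n - 1)) (Ph (n - 1))"
      using XP[of n] XP[of "n - 1"] n1 by (simp add: algebra_simps smult_add_left smult_add_right)
    finally have e1: "X * Ph n = Ph (Suc n) + smult (g n + ell n) (Ph n) + smult (ell n * g (n - 1)) (Ph (n - 1))" .
    have "X * Ph n = [:0,1:] * Ph n - smult c (Ph n)" unfolding X_def using X_shift[of "Ph n" c] by simp
    also have "\<dots> = Ph (Suc n) + smult (bh n - c) (Ph n) + smult (ah n) (Ph (n - 1))"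
      using Phrec[of n] n1 by (simp add: algebra_simps smult_diff_left)
    finally have eq: "smult (bh n - c) (Ph n) + smult (ah n) (Ph (n - 1)) = smult (g n + ell n) (Ph n) + smult (ell n * g (n - 1)) (Ph (n - 1))"
      using e1 by (simp add: algebra_simps)
    have nz: "Ph (n - 1) \<noteq> 0" using dPh(2)[of "n-1"] by auto
    have dl: "degree (Ph (n - 1)) < n" using dPh(1)[of "n-1"] n1 by simp
    have "bh n - c = g n + ell n \<and> ah n = ell n * g (n - 1)"
      by (rule coef_unique[OF dPh(1)[of n] dPh(2)[of n] dl nz eq])
    thus ?thesis by (simp add: algebra_simps)
  qed
  show ?thesis using bt rec by blast
qed



lemma F2:
  fixes P Q S :: "nat \<Rightarrow> complex poly" and b a balpha aalpha :: "nat \<Rightarrow> complex" and k :: complex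
  assumes P0: "P 0 = 1"
    and Prec: "\<And>n. [:0,1:] * P n = P (Suc n) + smult (b n) (P n)
                            + smult (a n) (if n = 0 then 0 else P (n - 1))"
    and Q0: "Q 0 = 0" and Q1: "Q 1 = 1"
    and Qrec: "\<And>n. n \<ge> 1 \<Longrightarrow> Q (Suc n) = [:-b n, 1:] * Q n - smult (a n) (Q (n - 1))"
    and S_def: "\<And>n. S n = P n + smult k (Q n)"
    and Srec: "\<And>n. [:0,1:] * S n = S (Suc n) + smult (balpha n) (S n)
                            + smult (aalpha n) (if n = 0 then 0 else S (n - 1))"
    and dS: "\<And>n. degree (S n) = n" "\<And>n. lead_coeff (S n) = 1"
  shows "balpha 0 = b 0 - k \<and> (\<forall>n\<ge>1. balpha n = b n \<and> aalpha n = a n)"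
proof -
  have S0: "S 0 = 1" using S_def[of 0] P0 Q0 by simp
  have "[:0,1:] = P 1 + [:b 0:]" using Prec[of 0] P0 by simp
  hence P1: "P 1 = [:0,1:] - [:b 0:]" by (simp add: eq_diff_eq)
  have "[:0,1:] = S 1 + [:balpha 0:]" using Srec[of 0] S0 by simp
  hence "coeff [:0,1::complex:] 0 = coeff (S 1 + [:balpha 0:]) 0" by simp
  also have "\<dots> = - b 0 + k + balpha 0" using S_def[of 1] P1 Q1 by simp
  finally have b0: "balpha 0 = b 0 - k" by (simp add: algebra_simps)
  have rec: "balpha n = b n \<and> aalpha n = a n" if n1: "n \<ge> 1" for n
  proof -
    have QX: "[:0,1:] * Q n = Q (Suc n) + smult (b n) (Q n) + smult (a n) (Q (n - 1))"
      using Qrec[OF n1] X_shift[of "Q n" "b n"] by (simp add: algebra_simps)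
    have PX: "[:0,1:] * P n = P (Suc n) + smult (b n) (P n) + smult (a n) (P (n - 1))"
      using Prec[of n] n1 by simp
    have "[:0,1:] * S n = [:0,1:] * P n + smult k ([:0,1:] * Q n)" using S_def[of n] by (simp add: algebra_simps)
    also have "\<dots> = S (Suc n) + smult (b n) (S n) + smult (a n) (S (n - 1))"
      unfolding PX QX S_def by (simp add: algebra_simps smult_add_right)
    finally have e1: "[:0,1:] * S n = S (Suc n) + smult (b n) (S n) + smult (a n) (S (n - 1))" .
    have eq: "smult (balpha n) (S n) + smult (aalpha n) (S (n - 1)) = smult (b n) (S n) + smult (a n) (S (n - 1))"
      using Srec[of n] e1 n1 by (simp add: algebra_simps)
    have nz: "S (n - 1) \<noteq> 0" using dS(2)[of "n-1"] by auto
    have dl: "degree (S (n - 1)) < n" using dS(1)[of "n-1"] n1 by simp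
    show ?thesis by (rule coef_unique[OF dS(1)[of n] dS(2)[of n] dl nz eq])
  qed
  show ?thesis using b0 rec by blast
qed



lemma F3:
  fixes S :: "nat \<Rightarrow> complex poly" and bh ah balpha aalpha ell g :: "nat \<Rightarrow> complex" and c :: complex
    and valpha :: "complex poly \<Rightarrow> complex"
  assumes S0: "S 0 = 1"
    and Srec: "\<And>n. [:0,1:] * S n = S (Suc n) + smult (balpha n) (S n)
                            + smult (aalpha n) (if n = 0 then 0 else S (n - 1))"
    and ba0: "balpha 0 = c + ell 1"
    and ban: "\<And>n. n \<ge> 1 \<Longrightarrow> balpha n = c + g n + ell (Suc n)"
    and aan: "\<And>n. n \<ge> 1 \<Longrightarrow> aalpha n = g n * ell n"
    and bhn: "\<And>n. n \<ge> 1 \<Longrightarrow> bh n = c + g n + ell n"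
    and ahn: "\<And>n. n \<ge> 1 \<Longrightarrow> ah n = ell n * g (n - 1)"
    and ellnz: "\<And>n. n \<ge> 1 \<Longrightarrow> ell n \<noteq> 0"
    and S_SMOP: "is_SMOP valpha S" and valpha_lin: "lin_func valpha"
  shows "quasi_definite (mulx valpha c) \<and> is_SMOP (mulx valpha c) (assoc1 bh ah)"
proof -
  define X where "X = [:-c, 1::complex:]"
  define R where "R = assoc1 bh ah"
  have dS: "\<And>n. degree (S n) = n" "\<And>n. lead_coeff (S n) = 1"
    using S_SMOP unfolding is_SMOP_def by blast+
  have XS0: "X * S 0 = S 1 + smult (ell 1) (S 0)"
  proof -
    have A: "X * S 0 = [:0,1:] * S 0 - smult c (S 0)" unfolding X_def using X_shift[of "S 0" c] by simp
    have h: "[:0,1:] * S 0 = S 1 + smult (c + ell 1) (S 0)" using Srec[of 0] ba0 by simp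
    have "X * S 0 = S 1 + smult (c + ell 1) (S 0) - smult c (S 0)" unfolding A h ..
    thus ?thesis by (simp add: smult_add_left)
  qed
  have XSn: "X * S n = S (Suc n) + smult (g n + ell (Suc n)) (S n) + smult (g n * ell n) (S (n - 1))"
    if "n \<ge> 1" for n
  proof -
    have A: "X * S n = [:0,1:] * S n - smult c (S n)" unfolding X_def using X_shift[of "S n" c] by simp
    have h: "[:0,1:] * S n = S (Suc n) + smult (c + g n + ell (Suc n)) (S n) + smult (g n * ell n) (S (n - 1))"
      using Srec[of n] ban[OF that] aan[OF that] that by simp
    have "X * S n = S (Suc n) + smult (c + g n + ell (Suc n)) (S n) + smult (g n * ell n) (S (n - 1)) - smult c (S n)"
      unfolding A h ..
    thus ?thesis by (simp add: smult_add_left)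
  qed
  have S1: "S 1 = X - smult (ell 1) 1" using XS0 S0 by (simp add: algebra_simps)
  have key2: "X * R n = S (Suc n) + smult (ell (Suc n)) (S n) \<and>
              X * R (Suc n) = S (Suc (Suc n)) + smult (ell (Suc (Suc n))) (S (Suc n))" for n
  proof (induction n)
    case 0
    have R1: "R 1 = X - smult (g 1 + ell 1) 1" using bhn[of 1] by (simp add: R_def X_def)
    have e2: "S 2 = X * S 1 - smult (g 1 + ell 2) (S 1) - smult (g 1 * ell 1) (S 0)"
      using XSn[of 1] by (simp add: numeral_2_eq_2 algebra_simps)
    have "X * R 1 = S 2 + smult (ell 2) (S 1)"
      unfolding e2 R1 S0 S1 by (simp add: algebra_simps smult_add_left smult_diff_right smult_add_right)
    thus ?case using XS0 S0 by (simp add: R_def numeral_2_eq_2)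
  next
    case (Suc n)
    have Rs: "R (Suc (Suc n)) = (X - smult (g (Suc (Suc n)) + ell (Suc (Suc n))) 1) * R (Suc n)
              - smult (ell (Suc (Suc n)) * g (Suc n)) (R (n))"
      using bhn[of "Suc (Suc n)"] ahn[of "Suc (Suc n)"] by (simp add: R_def X_def diff_diff_eq)
    have e3: "S (Suc (Suc (Suc n))) = X * S (Suc (Suc n)) - smult (g (Suc (Suc n)) + ell (Suc (Suc (Suc n)))) (S (Suc (Suc n)))
       - smult (g (Suc (Suc n)) * ell (Suc (Suc n))) (S (Suc n))"
      using XSn[of "Suc (Suc n)"] by (simp add: algebra_simps)
    have e2: "X * S (Suc n) = S (Suc (Suc n)) + smult (g (Suc n) + ell (Suc (Suc n))) (S (Suc n))
       + smult (g (Suc n) * ell (Suc n)) (S (n))"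
      using XSn[of "Suc n"] by simp
    have IH1: "X * R (n) = S (Suc n) + smult (ell (Suc n)) (S (n))" using Suc.IH by simp
    have IH2: "X * R (Suc n) = S (Suc (Suc n)) + smult (ell (Suc (Suc n))) (S (Suc n))" using Suc.IH by simp
    have "X * R (Suc (Suc n)) = (X - smult (g (Suc (Suc n)) + ell (Suc (Suc n))) 1) * (X * R (Suc n))
              - smult (ell (Suc (Suc n)) * g (Suc n)) (X * R (n))"
      unfolding Rs by (simp add: algebra_simps)
    also have "\<dots> = S (Suc (Suc (Suc n))) + smult (ell (Suc (Suc (Suc n)))) (S (Suc (Suc n)))"
      unfolding IH1 IH2 e3 by (simp add: algebra_simps smult_add_left smult_diff_right smult_add_right e2)
    finally show ?case using Suc.IH by simp
  qed
  hence key: "X * R n = S (Suc n) + smult (ell (Suc n)) (S n)" for n by blast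
  have dR: "degree (R n) = n \<and> lead_coeff (R n) = 1" for n
  proof -
    have dsm: "degree (smult (ell (Suc n)) (S n)) < degree (S (Suc n))"
      using degree_smult_le[of "ell (Suc n)" "S n"] dS(1)[of n] dS(1)[of "Suc n"] by simp
    have dr: "degree (X * R n) = Suc n" unfolding key using degree_add_eq_left[OF dsm] dS by simp
    have cr: "coeff (X * R n) (Suc n) = 1" unfolding key using dS by (simp add: coeff_eq_0)
    have Rnz: "R n \<noteq> 0" using dr by auto
    have "degree (X * R n) = degree (R n) + 1" using degree_mult_eq[of X "R n"] Rnz by (simp add: X_def)
    hence d: "degree (R n) = n" using dr by simp
    have "lead_coeff (X * R n) = lead_coeff X * lead_coeff (R n)" by (rule lead_coeff_mult)
    also have "lead_coeff X = 1" by (simp add: X_def)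
    finally have "lead_coeff (X * R n) = lead_coeff (R n)" by simp
    thus ?thesis using d dr cr by simp
  qed
  define M where "M = mulx valpha c"
  have M_lin: "lin_func M" unfolding lin_func_def M_def mulx_def
  proof (intro conjI allI)
    fix p q :: "complex poly"
    show "valpha ([:-c,1:] * (p + q)) = valpha ([:-c,1:] * p) + valpha ([:-c,1:] * q)"
      by (simp only: distrib_left lin_add[OF valpha_lin])
  next
    fix k and p :: "complex poly"
    show "valpha ([:-c,1:] * smult k p) = k * valpha ([:-c,1:] * p)"
      by (simp only: mult_smult_right lin_smult[OF valpha_lin])
  qed
  have MR: "M (R n * R m) = valpha (R m * S (Suc n)) + ell (Suc n) * valpha (R m * S n)" for n m
  proof -
    have "M (R n * R m) = valpha ((X * R n) * R m)" unfolding M_def mulx_def X_def by (simp only: mult.assoc)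
    also have "\<dots> = valpha (R m * S (Suc n)) + ell (Suc n) * valpha (R m * S n)"
      unfolding key using valpha_lin by (simp add: algebra_simps lin_add lin_smult)
    finally show ?thesis .
  qed
  have lt: "M (R n * R m) = 0" if "m < n" for n m
    using MR[of n m] orth_low[OF valpha_lin S_SMOP, of "R m"] dR[of m] that by simp
  have ne: "M (R n * R m) = 0" if "n \<noteq> m" for n m
  proof (cases "m < n")
    case True thus ?thesis using lt by simp
  next
    case False
    hence "n < m" using that by simp
    thus ?thesis using lt[of n m] by (simp add: mult.commute)
  qed
  have eq: "M (R n * R n) \<noteq> 0" for n
  proof -
    have z1: "valpha (R n * S (Suc n)) = 0" using orth_low[OF valpha_lin S_SMOP, of "R n"] dR[of n] by simp
    have "R n - S n = 0 \<or> degree (R n - S n) < n"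
    proof (rule deg_drop)
      show "degree (R n - S n) \<le> n" using dR[of n] dS(1)[of n] by (metis degree_diff_le order_refl)
      have r1: "coeff (R n) n = 1" using dR[of n] by metis
      have s1: "coeff (S n) n = 1" using dS[of n] by metis
      show "coeff (R n - S n) n = 0" using r1 s1 by simp
    qed
    hence z2: "valpha ((R n - S n) * S n) = 0"
      using orth_low[OF valpha_lin S_SMOP] lin_zero[OF valpha_lin] by auto
    have "valpha (R n * S n) = valpha (S n * S n) + valpha ((R n - S n) * S n)"
      using valpha_lin by (simp add: lin_add[symmetric] algebra_simps)
    hence "valpha (R n * S n) = valpha (S n * S n)" using z2 by simp
    moreover have "valpha (S n * S n) \<noteq> 0" using S_SMOP unfolding is_SMOP_def by blast
    ultimately show ?thesis using MR[of n n] z1 ellnz[of "Suc n"] by simp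
  qed
  have sm: "is_SMOP M R" unfolding is_SMOP_def using dR ne eq by blast
  have "quasi_definite M" by (rule SMOP_qd[OF M_lin sm])
  thus ?thesis using sm by (simp add: M_def R_def)
qed



theorem mainTheorem14:
  fixes v valpha :: "complex poly \<Rightarrow> complex"
    and P Ph S :: "nat \<Rightarrow> complex poly"
    and b a bh ah balpha aalpha :: "nat \<Rightarrow> complex"
    and c vh0 :: complex
    and D ell beta :: "nat \<Rightarrow> complex"
  assumes v_lin: "lin_func v" and v_qd: "quasi_definite v"
    and P_SMOP: "is_SMOP v P" and P_rec: "recur b a P"
    and D_def: "\<And>n. D n = v 1 * poly (assocm1 b a n) c + vh0 * poly (P n) c"
    and D_nz: "\<And>n. D n \<noteq> 0"
    and Ph_SMOP: "is_SMOP (\<lambda>p. divx v c p + vh0 * dirac c p) Ph"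
    and Ph_rec: "recur bh ah Ph"
    and ell_def: "\<And>n. n \<ge> 1 \<Longrightarrow> ell n = - D n / D (n - 1)"
    and beta_def: "\<And>n. beta n = - poly (Ph (Suc n)) c / poly (Ph n) c"
    and S_def: "\<And>n. S n = P n + smult (v 1 / vh0) (assocm1 b a n)"
    and valpha_lin: "lin_func valpha" and valpha_qd: "quasi_definite valpha"
    and S_SMOP: "is_SMOP valpha S" and S_rec: "recur balpha aalpha S"
  shows "quasi_definite (mulx valpha c) \<and> is_SMOP (mulx valpha c) (assoc1 bh ah)
         \<and> imat_shift (jacobi balpha aalpha) c
             = imat_mult (lower_bidiag (\<lambda>n. beta n)) (upper_bidiag (\<lambda>n. ell (Suc n)))
         \<and> imat_shift (jacobi (\<lambda>n. bh (Suc n)) (\<lambda>n. ah (Suc n))) c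
             = imat_mult (upper_bidiag (\<lambda>n. ell (Suc n))) (lower_bidiag (\<lambda>n. beta n))"
proof -
  define v0 where "v0 = v 1"
  define Q where "Q = assocm1 b a"
  define X where "X = [:-c, 1::complex:]"
  have P0: "P 0 = 1" and Prec: "\<And>n. [:0,1:] * P n = P (Suc n) + smult (b n) (P n)
                            + smult (a n) (if n = 0 then 0 else P (n - 1))"
    and anz: "\<And>n. n \<ge> 1 \<Longrightarrow> a n \<noteq> 0" using P_rec unfolding recur_def by blast+
  have Ph0: "Ph 0 = 1" and Phrec: "\<And>n. [:0,1:] * Ph n = Ph (Suc n) + smult (bh n) (Ph n)
                            + smult (ah n) (if n = 0 then 0 else Ph (n - 1))"
    using Ph_rec unfolding recur_def by blast+
  have S0: "S 0 = 1" and Srec: "\<And>n. [:0,1:] * S n = S (Suc n) + smult (balpha n) (S n)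
                            + smult (aalpha n) (if n = 0 then 0 else S (n - 1))"
    using S_rec unfolding recur_def by blast+
  have dP: "\<And>n. degree (P n) = n" "\<And>n. lead_coeff (P n) = 1"
    using P_SMOP unfolding is_SMOP_def by blast+
  have dPh: "\<And>n. degree (Ph n) = n" "\<And>n. lead_coeff (Ph n) = 1"
    using Ph_SMOP unfolding is_SMOP_def by blast+
  have dS: "\<And>n. degree (S n) = n" "\<And>n. lead_coeff (S n) = 1"
    using S_SMOP unfolding is_SMOP_def by blast+
  have "v (P 0 * P 0) \<noteq> 0" using P_SMOP unfolding is_SMOP_def by blast
  hence v0nz: "v0 \<noteq> 0" using P0 by (simp add: v0_def)
  have Q0: "Q 0 = 0" and Q1: "Q 1 = 1" by (simp_all add: Q_def assocm1_def)
  have Qrec: "Q (Suc n) = [:-b n, 1:] * Q n - smult (a n) (Q (n - 1))" if "n \<ge> 1" for n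
  proof (cases n)
    case 0 thus ?thesis using that by simp
  next
    case (Suc m) note m = this
    show ?thesis
    proof (cases m)
      case 0 thus ?thesis using m by (simp add: Q_def assocm1_def)
    next
      case (Suc k)
      thus ?thesis using m by (simp add: Q_def assocm1_def numeral_2_eq_2)
    qed
  qed
  have D0: "D 0 = vh0" using D_def[of 0] P0 Q0 by (simp add: Q_def)
  hence vh0nz: "vh0 \<noteq> 0" using D_nz by metis
  have "[:0,1:] = P 1 + [:b 0:]" using Prec[of 0] P0 by simp
  hence "P 1 = [:0,1:] - [:b 0:]" by (simp add: eq_diff_eq)
  hence P1: "P 1 = [:- b 0, 1:]" by simp
  have Dv: "D n = v0 * poly (Q n) c + vh0 * poly (P n) c" for n using D_def by (simp add: v0_def Q_def)
  have D1: "D 1 = (c - b 0) * D 0 + v0" using Dv[of 1] Q1 P1 D0 by (simp add: algebra_simps)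
  have Pc: "poly (P (Suc n)) c = (c - b n) * poly (P n) c - a n * poly (P (n - 1)) c" if "n \<ge> 1" for n
    using arg_cong[OF Prec[of n], of "\<lambda>p. poly p c"] that by (simp add: algebra_simps)
  have Qc: "poly (Q (Suc n)) c = (c - b n) * poly (Q n) c - a n * poly (Q (n - 1)) c" if "n \<ge> 1" for n
    using arg_cong[OF Qrec[OF that], of "\<lambda>p. poly p c"] by (simp add: algebra_simps)
  have Drec: "D (Suc n) = (c - b n) * D n - a n * D (n - 1)" if "n \<ge> 1" for n
    using Dv[of "Suc n"] Dv[of n] Dv[of "n - 1"] Pc[OF that] Qc[OF that] by (simp add: algebra_simps)
  have ellnz: "ell n \<noteq> 0" if "n \<ge> 1" for n using ell_def[OF that] D_nz by simp
  have ell1: "ell 1 = b 0 - c - v0 / vh0"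
    using ell_def[of 1] D1 D0 vh0nz by (simp add: field_simps)
  have ellrec: "ell (Suc n) = b n - c - a n / ell n" if "n \<ge> 1" for n
  proof -
    have "ell (Suc n) = - D (Suc n) / D n" using ell_def[of "Suc n"] by simp
    also have "\<dots> = b n - c + a n * D (n - 1) / D n" using Drec[OF that] D_nz[of n]
      by (simp add: field_simps)
    moreover have "a n / ell n = - (a n * D (n - 1) / D n)"
    proof -
      have "D n = - (ell n * D (n - 1))" using ell_def[OF that] D_nz[of "n-1"] by simp
      thus ?thesis using ellnz[OF that] D_nz[of "n-1"] by (simp add: divide_simps)
    qed
    ultimately show ?thesis by simp
  qed
  define \<gamma> where "\<gamma> n = b n - c - ell (Suc n)" for n
  have g0: "\<gamma> 0 = v0 / vh0" using ell1 by (simp add: \<gamma>_def)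
  have gell: "\<gamma> n * ell n = a n" if "n \<ge> 1" for n
    using ellrec[OF that] ellnz[OF that] by (simp add: \<gamma>_def field_simps)
  have gnz: "\<gamma> n \<noteq> 0" for n
  proof (cases "n = 0")
    case True thus ?thesis using g0 v0nz vh0nz by simp
  next
    case False thus ?thesis using gell[of n] anz[of n] by fastforce
  qed
  define w where "w = (\<lambda>p. divx v c p + vh0 * dirac c p)"
  have w_lin: "lin_func w" unfolding lin_func_def w_def divx_def dirac_def
    using v_lin by (simp add: sd_add sd_smult lin_add lin_smult algebra_simps)
  have wX: "w (X * f) = v f" for f unfolding w_def divx_def dirac_def X_def sd_X by simp
  have sd1: "synthetic_div (1::complex poly) c = 0" by (simp add: synthetic_div_eq_0_iff)
  have w1: "w 1 = vh0" unfolding w_def divx_def dirac_def sd1 lin_zero[OF v_lin] by simp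
  have vP: "v (P n) = 0" if "n \<ge> 1" for n
  proof -
    have "v (P n * P 0) = 0" using P_SMOP that unfolding is_SMOP_def by simp
    thus ?thesis using P0 by simp
  qed
  have Pstep: "P (Suc n) = X * P n + smult (c - b n) (P n) - smult (a n) (P (n - 1))" if "n \<ge> 1" for n
  proof -
    have "[:0,1:] * P n = X * P n + smult c (P n)" unfolding X_def by (rule X_shift)
    thus ?thesis using Prec[of n] that by (simp add: algebra_simps smult_diff_left)
  qed
  have P1X: "P 1 = X + smult (c - b 0) 1" using P1 by (simp add: X_def)
  have wP2: "w (P n) = D n \<and> w (P (Suc n)) = D (Suc n)" for n
  proof (induction n)
    case 0
    have "w (P 1) = w X + w (smult (c - b 0) 1)" unfolding P1X by (rule lin_add[OF w_lin])
    also have "\<dots> = v 1 + (c - b 0) * vh0" unfolding lin_smult[OF w_lin] w1 using wX[of 1] by simp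
    finally have "w (P 1) = v 1 + (c - b 0) * vh0" .
    moreover have "D 1 = v 1 + (c - b 0) * vh0" using D1 D0 by (simp add: v0_def add.commute)
    ultimately show ?case using P0 w1 D0 by simp
  next
    case (Suc n)
    have "w (P (Suc (Suc n))) = v (P (Suc n)) + (c - b (Suc n)) * w (P (Suc n)) - a (Suc n) * w (P n)"
      using Pstep[of "Suc n"] wX w_lin by (simp add: lin_add lin_diff lin_smult)
    also have "\<dots> = D (Suc (Suc n))" using vP[of "Suc n"] Suc.IH Drec[of "Suc n"] by simp
    finally show ?case using Suc.IH by simp
  qed
  hence wP: "w (P n) = D n" for n by blast
  define Qh where "Qh n = (if n = 0 then 1 else P n + smult (ell n) (P (n - 1)))" for n
  have PhQ: "Ph n = Qh n" for n
  proof (cases "n = 0")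
    case True thus ?thesis using Ph0 by (simp add: Qh_def)
  next
    case False
    hence n1: "n \<ge> 1" by simp
    define q where "q = P n + smult (ell n) (P (n - 1))"
    have dsm: "degree (smult (ell n) (P (n - 1))) < degree (P n)"
    proof -
      have "degree (smult (ell n) (P (n - 1))) \<le> n - 1"
        using degree_smult_le[of "ell n" "P (n - 1)"] dP(1)[of "n - 1"] by simp
      thus ?thesis using n1 dP(1)[of n] by linarith
    qed
    have dq: "degree q = n" unfolding q_def using degree_add_eq_left[OF dsm] dP by simp
    have lq: "lead_coeff q = 1" unfolding dq using dP n1 by (simp add: q_def coeff_eq_0)
    have "w q = w (P n) + ell n * w (P (n - 1))" unfolding q_def lin_add[OF w_lin] lin_smult[OF w_lin] ..
    hence wq: "w q = 0" using wP ell_def[OF n1] D_nz[of "n-1"] by simp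
    have "q = Ph n"
    proof (rule SMOP_unique[OF w_lin _ dq lq])
      show "is_SMOP w Ph" using Ph_SMOP unfolding w_def .
      fix g :: "complex poly" assume dg: "degree g < n"
      define h where "h = synthetic_div g c"
      have gh: "g = X * h + [:poly g c:]" using synthetic_div_correct'[of c g] by (simp add: h_def X_def)
      have "w (q * g) = w (X * (q * h)) + poly g c * w q"
        using w_lin by (subst gh) (simp add: algebra_simps lin_add lin_smult)
      also have "\<dots> = v (q * h)" using wX wq by simp
      also have "\<dots> = v (h * P n) + ell n * v (h * P (n - 1))"
        using v_lin by (simp add: q_def algebra_simps lin_add lin_smult)
      also have "\<dots> = 0"
      proof (cases "degree g = 0")
        case True
        hence "h = 0" by (simp add: h_def synthetic_div_eq_0_iff)
        thus ?thesis using lin_zero[OF v_lin] by simp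
      next
        case False
        hence "degree h < n - 1" using dg by (simp add: h_def degree_synthetic_div)
        thus ?thesis using orth_low[OF v_lin P_SMOP, of h] by simp
      qed
      finally show "w (q * g) = 0" .
    qed
    thus ?thesis using False by (simp add: Qh_def q_def)
  qed
  have PhQ': "Ph n = P n + smult (ell n) (P (n - 1))" if "n \<ge> 1" for n
    using PhQ[of n] that by (simp add: Qh_def)
  have g_def: "\<And>n. \<gamma> n = b n - c - ell (Suc n)" by (simp add: \<gamma>_def)
  have f1: "(\<forall>n. beta n = \<gamma> n) \<and> (\<forall>n\<ge>1. bh n = c + \<gamma> n + ell n \<and> ah n = ell n * \<gamma> (n - 1))"
    by (rule F1[OF P0 Prec Ph0 PhQ' Phrec dPh g_def gell gnz beta_def])
  have S_def': "\<And>n. S n = P n + smult (v0 / vh0) (Q n)" using S_def by (simp add: v0_def Q_def)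
  have f2: "balpha 0 = b 0 - v0 / vh0 \<and> (\<forall>n\<ge>1. balpha n = b n \<and> aalpha n = a n)"
    by (rule F2[OF P0 Prec Q0 Q1 Qrec S_def' Srec dS])
  have ba0: "balpha 0 = c + ell 1" using f2 ell1 by simp
  have ban: "\<And>n. n \<ge> 1 \<Longrightarrow> balpha n = c + \<gamma> n + ell (Suc n)" using f2 by (simp add: \<gamma>_def)
  have aan: "\<And>n. n \<ge> 1 \<Longrightarrow> aalpha n = \<gamma> n * ell n" using f2 gell by simp
  have bhn: "\<And>n. n \<ge> 1 \<Longrightarrow> bh n = c + \<gamma> n + ell n" using f1 by simp
  have ahn: "\<And>n. n \<ge> 1 \<Longrightarrow> ah n = ell n * \<gamma> (n - 1)" using f1 by simp
  have bt: "\<And>n. beta n = \<gamma> n" using f1 by simp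
  have p1: "quasi_definite (mulx valpha c) \<and> is_SMOP (mulx valpha c) (assoc1 bh ah)"
    by (rule F3[OF S0 Srec ba0 ban aan bhn ahn ellnz S_SMOP valpha_lin])
  have m1: "imat_shift (jacobi balpha aalpha) c
             = imat_mult (lower_bidiag (\<lambda>n. beta n)) (upper_bidiag (\<lambda>n. ell (Suc n)))"
  proof (intro ext)
    fix i j
    show "imat_shift (jacobi balpha aalpha) c i j
       = imat_mult (lower_bidiag (\<lambda>n. beta n)) (upper_bidiag (\<lambda>n. ell (Suc n))) i j"
      unfolding LU_entry imat_shift_def jacobi_def bt
      using ba0 ban[of i] aan[of i] by auto
  qed
  have m2: "imat_shift (jacobi (\<lambda>n. bh (Suc n)) (\<lambda>n. ah (Suc n))) c
             = imat_mult (upper_bidiag (\<lambda>n. ell (Suc n))) (lower_bidiag (\<lambda>n. beta n))"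
  proof (intro ext)
    fix i j
    show "imat_shift (jacobi (\<lambda>n. bh (Suc n)) (\<lambda>n. ah (Suc n))) c i j
       = imat_mult (upper_bidiag (\<lambda>n. ell (Suc n))) (lower_bidiag (\<lambda>n. beta n)) i j"
      unfolding UL_entry imat_shift_def jacobi_def bt
      using bhn[of "Suc i"] ahn[of "Suc i"] by auto
  qed
  show ?thesis using p1 m1 m2 by blast
qed

end
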